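(* Let $k\ge 1$. (i) For any $i\in\{1,\dots,k\}$, if a language $L$ is recognized by some $\mathrm{rtDVA}(k)^i_1$, then $L$ is recognized by some $\mathrm{rtDVA}(k)$. (ii) For any $c\in\mathbb{Q}$, if a language $L$ is recognized by some $\mathrm{rtDVA}(k)^1_c$, then $L$ is recognized by some $\mathrm{rtDVA}(k+1)$.
   Context: A real-time deterministic vector automaton of dimension $k$ ($\mathrm{rtDVA}(k)$) is a 6-tuple $\mathcal{V}=(Q,\Sigma,\delta,q_0,Q_a,v)$ where $Q$ is a finite set of states, $q_0\in Q$ the initial state, $Q_a\subseteq Q$ the accept states, $\Sigma$ the input alphabet, $v\in\mathbb{Q}^k$ an initial row vector (freely chosen by the designer), and $\delta:Q\times(\Sigma\cup\{\cent,\$\})\times\{=,\neq\}\to Q\times S$, where $S$ is the set of $k\times k$ rational matrices. On input $w$, the machine reads $\cent w\$$ from left to right, one symbol per step, starting in $q_0$ with vector $v$. If it is in state $q$, reads symbol $\sigma$, and $\omega$ is "$=$" iff the first entry of the current vector equals $1$ (and "$\neq$" otherwise), and $\delta(q,\sigma,\omega)=(q',M)$, it moves to $q'$ and replaces the current row vector $x$ by $xM$. The input is accepted iff after processing $\$$ the state is in $Q_a$ and the first entry of the vector equals $1$. For $i\in\{1,\dots,k\}$ and $c\in\mathbb{Q}$, an $\mathrm{rtDVA}(k)^i_c$ is defined identically except that every test (both the value $\omega$ used in transitions and the final acceptance test) checks whether the $i$-th entry of the vector equals $c$ instead of whether the first entry equals $1$. *)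

theory Defs
  imports Complex_Main
begin

datatype 'a tsym = Cent | Dollar | Letter 'a

text \<open>States are natural numbers drawn from a
finite set; vectors of dimension k are functions nat => rat whose meaningful entries are
indices 0..k-1 (paper index j corresponds to index j-1 here); k x k matrices are
functions nat => nat => rat (only entries with indices < k matter).
The boolean argument of delta is the outcome of the test (True means "=").\<close>
record 'a rtdva =
  states :: "nat set"
  init :: nat
  acc :: "nat set"
  ivec :: "nat \<Rightarrow> rat"
  delta :: "nat \<Rightarrow> 'a tsym \<Rightarrow> bool \<Rightarrow> nat \<times> (nat \<Rightarrow> nat \<Rightarrow> rat)"

definition wf_rtdva :: "nat \<Rightarrow> 'a rtdva \<Rightarrow> bool" where
  "wf_rtdva k A \<longleftrightarrow> finite (states A) \<and> init A \<in> states A \<and> acc A \<subseteq> states A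
     \<and> (\<forall>j\<ge>k. ivec A j = 0)
     \<and> (\<forall>q\<in>states A. \<forall>s b. fst (delta A q s b) \<in> states A)"

definition vecmat :: "nat \<Rightarrow> (nat \<Rightarrow> rat) \<Rightarrow> (nat \<Rightarrow> nat \<Rightarrow> rat) \<Rightarrow> nat \<Rightarrow> rat" where
  "vecmat k x M = (\<lambda>j. if j < k then (\<Sum>l<k. x l * M l j) else 0)"

text \<open>Run in dimension k with the test "i-th entry (1-based) equals c".\<close>
fun run :: "nat \<Rightarrow> nat \<Rightarrow> rat \<Rightarrow> 'a rtdva \<Rightarrow> nat \<Rightarrow> (nat \<Rightarrow> rat) \<Rightarrow> 'a tsym list
             \<Rightarrow> nat \<times> (nat \<Rightarrow> rat)" where
  "run k i c A q x [] = (q, x)"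
| "run k i c A q x (s # ss) =
     (let (q', M) = delta A q s (x (i - 1) = c) in run k i c A q' (vecmat k x M) ss)"

definition lang :: "nat \<Rightarrow> nat \<Rightarrow> rat \<Rightarrow> 'a rtdva \<Rightarrow> 'a list set" where
  "lang k i c A = {w. let (q, x) = run k i c A (init A) (ivec A) (Cent # map Letter w @ [Dollar])
                      in q \<in> acc A \<and> x (i - 1) = c}"

abbreviation lang_std :: "nat \<Rightarrow> 'a rtdva \<Rightarrow> 'a list set" where
  "lang_std k A \<equiv> lang k 1 1 A"

end

theory Submission
  imports Defs
begin

definition simB :: "'a rtdva \<Rightarrow> ((nat \<Rightarrow> rat) \<Rightarrow> (nat \<Rightarrow> rat)) \<Rightarrow> ((nat \<Rightarrow> nat \<Rightarrow> rat) \<Rightarrow> (nat \<Rightarrow> nat \<Rightarrow> rat)) \<Rightarrow> 'a rtdva" where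
  "simB A f T = A\<lparr>ivec := f (ivec A), delta := (\<lambda>q s b. (fst (delta A q s b), T (snd (delta A q s b))))\<rparr>"

lemma sim_run:
  assumes t: "\<And>x. (f x 0 = 1) = (x (i-1) = c)"
    and m: "\<And>x M. vecmat k2 (f x) (T M) = f (vecmat k1 x M)"
  shows "run k2 1 1 (simB A f T) q (f x) w = (fst (run k1 i c A q x w), f (snd (run k1 i c A q x w)))"
proof (induction w arbitrary: q x)
  case Nil then show ?case by simp
next
  case (Cons s ss)
  show ?case
    by (simp add: simB_def t m Cons[of _ "vecmat k1 x _", symmetric] case_prod_beta)
qed

lemma sim_lang:
  assumes t: "\<And>x. (f x 0 = 1) = (x (i-1) = c)"
    and m: "\<And>x M. vecmat k2 (f x) (T M) = f (vecmat k1 x M)"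
  shows "lang k2 1 1 (simB A f T) = lang k1 i c A"
proof -
  have "run k2 1 1 (simB A f T) (init A) (f (ivec A)) w = (fst (run k1 i c A (init A) (ivec A) w), f (snd (run k1 i c A (init A) (ivec A) w)))" for w
    using sim_run[OF t m] by blast
  moreover have "init (simB A f T) = init A" "acc (simB A f T) = acc A" "ivec (simB A f T) = f (ivec A)"
    by (simp_all add: simB_def)
  ultimately show ?thesis
    unfolding lang_def by (auto simp del: run.simps simp: case_prod_beta t)
qed

lemma wf_simB:
  assumes "wf_rtdva k1 A" "\<forall>j\<ge>k2. f (ivec A) j = 0"
  shows "wf_rtdva k2 (simB A f T)"
  using assms by (auto simp: wf_rtdva_def simB_def)

theorem theorem1:
  fixes k :: nat and L :: "'a::finite list set"
  assumes "k \<ge> 1"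
  shows "(\<forall>i\<in>{1..k}. (\<exists>A::'a rtdva. wf_rtdva k A \<and> lang k i 1 A = L)
            \<longrightarrow> (\<exists>B::'a rtdva. wf_rtdva k B \<and> lang_std k B = L))
       \<and> (\<forall>c::rat. (\<exists>A::'a rtdva. wf_rtdva k A \<and> lang k 1 c A = L)
            \<longrightarrow> (\<exists>B::'a rtdva. wf_rtdva (k + 1) B \<and> lang_std (k + 1) B = L))"
proof (intro conjI ballI allI impI)
  fix i assume i: "i \<in> {1..k}" and "\<exists>A::'a rtdva. wf_rtdva k A \<and> lang k i 1 A = L"
  then obtain A :: "'a rtdva" where A: "wf_rtdva k A" "lang k i 1 A = L" by blast
  define \<sigma> where "\<sigma> j = (if j = 0 then i - 1 else if j = i - 1 then 0 else j)" for j
  have inv: "\<sigma> (\<sigma> j) = j" for j by (simp add: \<sigma>_def)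
  have lt: "j < k \<Longrightarrow> \<sigma> j < k" for j using i by (auto simp: \<sigma>_def)
  have ge: "j \<ge> k \<Longrightarrow> \<sigma> j = j" for j using i by (auto simp: \<sigma>_def)
  define f where "f x = x \<circ> \<sigma>" for x :: "nat \<Rightarrow> rat"
  define T where "T M = (\<lambda>l j. M (\<sigma> l) (\<sigma> j))" for M :: "nat \<Rightarrow> nat \<Rightarrow> rat"
  have t: "(f x 0 = 1) = (x (i-1) = 1)" for x by (simp add: f_def \<sigma>_def)
  have m: "vecmat k (f x) (T M) = f (vecmat k x M)" for x M
  proof
    fix j
    show "vecmat k (f x) (T M) j = f (vecmat k x M) j"
    proof (cases "j < k")
      case True
      have "(\<Sum>l<k. x (\<sigma> l) * M (\<sigma> l) (\<sigma> j)) = (\<Sum>l<k. x l * M l (\<sigma> j))"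
        by (rule sum.reindex_bij_witness[where i=\<sigma> and j=\<sigma>]) (auto simp: inv lt)
      then show ?thesis using True lt[OF True] by (simp add: vecmat_def f_def T_def)
    next
      case False then show ?thesis using ge[of j] by (simp add: vecmat_def f_def T_def)
    qed
  qed
  have "wf_rtdva k (simB A f T)"
    using A(1) ge by (intro wf_simB) (auto simp: wf_rtdva_def f_def)
  moreover have "lang k 1 1 (simB A f T) = lang k i 1 A" by (rule sim_lang[OF t m])
  hence "lang k 1 1 (simB A f T) = L" using A(2) by (rule trans)
  ultimately show "\<exists>B::'a rtdva. wf_rtdva k B \<and> lang_std k B = L" by blast
next
  fix c :: rat assume "\<exists>A::'a rtdva. wf_rtdva k A \<and> lang k 1 c A = L"
  then obtain A :: "'a rtdva" where A: "wf_rtdva k A" "lang k 1 c A = L" by blast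
  have k0: "0 < k" using assms by simp
  define f where "f x = (\<lambda>j. if j = 0 then x 0 - c + 1 else if j < k then x j else if j = k then 1 else 0)" for x :: "nat \<Rightarrow> rat"
  define T where "T M = (\<lambda>l j. if l < k then (if j < k then M l j else 0)
      else if l = k then (if j < k then (c - 1) * M 0 j - (if j = 0 then c - 1 else 0) else if j = k then 1 else 0) else 0)"
    for M :: "nat \<Rightarrow> nat \<Rightarrow> rat"
  have t: "(f x 0 = 1) = (x (1-1) = c)" for x by (simp add: f_def)
  have m: "vecmat (k+1) (f x) (T M) = f (vecmat k x M)" for x M
  proof
    fix j
    have fx: "l < k \<Longrightarrow> f x l = x l + (if l = 0 then 1 - c else 0)" for l
      using k0 by (simp add: f_def)
    have fk: "f x k = 1" using k0 by (simp add: f_def)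
    show "vecmat (k+1) (f x) (T M) j = f (vecmat k x M) j"
    proof (cases "j < k")
      case True
      have "(\<Sum>l<k+1. f x l * T M l j) = (\<Sum>l<k. f x l * M l j) + ((c - 1) * M 0 j - (if j = 0 then c - 1 else 0))"
        using True fk by (simp add: T_def)
      also have "(\<Sum>l<k. f x l * M l j) = (\<Sum>l<k. x l * M l j + (if l = 0 then (1 - c) * M l j else 0))"
        by (rule sum.cong) (auto simp: fx algebra_simps)
      also have "\<dots> = (\<Sum>l<k. x l * M l j) + (1 - c) * M 0 j"
        using k0 by (simp add: sum.distrib)
      finally show ?thesis using True k0
        by (auto simp: vecmat_def f_def algebra_simps)
    next
      case False
      then show ?thesis using k0 by (auto simp: vecmat_def f_def T_def)
    qed
  qed
  have "wf_rtdva (k+1) (simB A f T)"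
    using A(1) by (intro wf_simB) (auto simp: wf_rtdva_def f_def)
  moreover have "lang (k+1) 1 1 (simB A f T) = lang k 1 c A" by (rule sim_lang[OF t m])
  hence "lang (k+1) 1 1 (simB A f T) = L" using A(2) by (rule trans)
  ultimately show "\<exists>B::'a rtdva. wf_rtdva (k+1) B \<and> lang_std (k+1) B = L" by blast
qed

end
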